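(* Let $(M,\varepsilon)$ be a local Lie group and $p\in M$. Then the evaluation map $e_p:\mathfrak X_\varepsilon(M)\to T_pM$, $\xi\mapsto\xi(p)$, is a linear isomorphism which preserves brackets: $[\xi,\eta](p)=[\xi(p),\eta(p)]_p$ for all $\xi,\eta\in\mathfrak X_\varepsilon(M)$, where on the left is the Lie bracket of vector fields.
   Context: $M$ is a connected smooth manifold, $\dim M=n\ge2$, summation convention. A splitting $\varepsilon$ assigns smoothly to each $(p,q)$ a linear isomorphism $\varepsilon^{p,q}:T_pM\to T_qM$ with $\varepsilon^{q,r}\circ\varepsilon^{p,q}=\varepsilon^{p,r}$, $\varepsilon^{p,p}=\mathrm{id}$; in charts $\varepsilon^{p,q}(\partial/\partial x^j)=\varepsilon^i_j(x,y)\partial/\partial y^i$, and $\Gamma^i_{jk}(x)=[\partial\varepsilon^i_k(x,y)/\partial y^j]_{y=x}$. $\mathfrak X_\varepsilon(M)$ is the vector space of $\varepsilon$-invariant vector fields ($\varepsilon^{p,q}\vartheta(p)=\vartheta(q)$ for all $p,q$). $\mathcal R_2(\varepsilon)^i_{rj,k}=[\partial_r\Gamma^i_{kj}+\Gamma^a_{kr}\Gamma^i_{aj}]_{rj}-[\cdots]_{jr}$. A local Lie group is a manifold $M$ with a splitting $\varepsilon$ such that $\mathcal R_2(\varepsilon)=0$ (equivalently, $\mathfrak X_\varepsilon(M)$ is closed under the Lie bracket). For $u,v\in T_pM$, $[u,v]_p^i=\Gamma^i_{ab}(p)(u^av^b-v^au^b)$. *)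

theory Defs
  imports "HOL-Analysis.Analysis"
begin

text \<open>Smooth manifolds are modelled by an atlas of charts on a topological type 'a.
A chart is a pair (U, phi) with U open in 'a and phi a homeomorphism of U onto an open
subset of real^'n.  Tangent vectors at p are represented by their coordinate vectors in
every chart containing p (value 0 for charts not containing p), compatible under the
Jacobians of the transition maps.\<close>

type_synonym ('a, 'n) chart = "'a set \<times> ('a \<Rightarrow> real^'n)"
type_synonym ('a, 'n) tvec = "('a, 'n) chart \<Rightarrow> real^'n"

text \<open>k-times continuously differentiable maps on a set (intended for open sets).\<close>
fun Ck :: "nat \<Rightarrow> 'x::real_normed_vector set \<Rightarrow> ('x \<Rightarrow> 'y::real_normed_vector) \<Rightarrow> bool" where
  "Ck 0 S f = continuous_on S f"
| "Ck (Suc k) S f = (\<exists>f'. (\<forall>x\<in>S. (f has_derivative f' x) (at x)) \<and> (\<forall>v. Ck k S (\<lambda>x. f' x v)))"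

definition smooth_on :: "'x::real_normed_vector set \<Rightarrow> ('x \<Rightarrow> 'y::real_normed_vector) \<Rightarrow> bool" where
  "smooth_on S f \<longleftrightarrow> (\<forall>k. Ck k S f)"

definition dd :: "('x::real_normed_vector \<Rightarrow> 'y::real_normed_vector) \<Rightarrow> 'x \<Rightarrow> 'x \<Rightarrow> 'y" where
  "dd f x u = frechet_derivative f (at x) u"

definition lcomb :: "real \<Rightarrow> ('b \<Rightarrow> 'x::real_vector) \<Rightarrow> real \<Rightarrow> ('b \<Rightarrow> 'x) \<Rightarrow> 'b \<Rightarrow> 'x" where
  "lcomb a u b v = (\<lambda>z. a *\<^sub>R u z + b *\<^sub>R v z)"

definition lin_on :: "('b \<Rightarrow> 'x::real_vector) set \<Rightarrow> (('b \<Rightarrow> 'x) \<Rightarrow> ('c \<Rightarrow> 'y::real_vector)) \<Rightarrow> bool" where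
  "lin_on S f \<longleftrightarrow> (\<forall>u\<in>S. \<forall>v\<in>S. \<forall>a b. f (lcomb a u b v) = lcomb a (f u) b (f v))"

definition transition :: "('a, 'n) chart \<Rightarrow> ('a, 'n) chart \<Rightarrow> real^'n \<Rightarrow> real^'n" where
  "transition c c' = snd c' \<circ> inv_into (fst c) (snd c)"

definition smooth_atlas :: "('a::topological_space, 'n::finite) chart set \<Rightarrow> bool" where
  "smooth_atlas A \<longleftrightarrow>
     (\<forall>c\<in>A. open (fst c) \<and> inj_on (snd c) (fst c) \<and> open (snd c ` fst c) \<and>
              homeomorphism (fst c) (snd c ` fst c) (snd c) (inv_into (fst c) (snd c))) \<and>
     (\<Union>c\<in>A. fst c) = UNIV \<and>
     (\<forall>c\<in>A. \<forall>c'\<in>A. smooth_on (snd c ` (fst c \<inter> fst c')) (transition c c'))"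

definition tangent_space :: "('a, 'n::finite) chart set \<Rightarrow> 'a \<Rightarrow> ('a, 'n) tvec set" where
  "tangent_space A p = {v. (\<forall>c. (c \<notin> A \<or> p \<notin> fst c) \<longrightarrow> v c = 0) \<and>
      (\<forall>c\<in>A. \<forall>c'\<in>A. p \<in> fst c \<longrightarrow> p \<in> fst c' \<longrightarrow>
          v c' = dd (transition c c') (snd c p) (v c))}"

definition tv :: "('a, 'n::finite) chart set \<Rightarrow> ('a, 'n) chart \<Rightarrow> 'a \<Rightarrow> real^'n \<Rightarrow> ('a, 'n) tvec" where
  "tv A c p w = (\<lambda>c'. if c' \<in> A \<and> p \<in> fst c' then dd (transition c c') (snd c p) w else 0)"

definition loc :: "('a \<Rightarrow> ('a, 'n::finite) tvec) \<Rightarrow> ('a, 'n) chart \<Rightarrow> real^'n \<Rightarrow> real^'n" where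
  "loc \<xi> c x = \<xi> (inv_into (fst c) (snd c) x) c"

definition smooth_vector_field :: "('a::topological_space, 'n::finite) chart set \<Rightarrow> ('a \<Rightarrow> ('a, 'n) tvec) \<Rightarrow> bool" where
  "smooth_vector_field A \<xi> \<longleftrightarrow> (\<forall>p. \<xi> p \<in> tangent_space A p) \<and>
      (\<forall>c\<in>A. smooth_on (snd c ` fst c) (loc \<xi> c))"

text \<open>Coordinates of eps^{p,q} in charts c (at p) and c' (at q):
  split_coord A eps c c' (x,y) w = eps^{x,y}(w^j d/dx^j) expressed in c'.\<close>
definition split_coord :: "('a, 'n::finite) chart set \<Rightarrow> ('a \<Rightarrow> 'a \<Rightarrow> ('a, 'n) tvec \<Rightarrow> ('a, 'n) tvec)
     \<Rightarrow> ('a, 'n) chart \<Rightarrow> ('a, 'n) chart \<Rightarrow> (real^'n) \<times> (real^'n) \<Rightarrow> real^'n \<Rightarrow> real^'n" where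
  "split_coord A eps c c' xy w =
     (let p = inv_into (fst c) (snd c) (fst xy); q = inv_into (fst c') (snd c') (snd xy)
      in eps p q (tv A c p w) c')"

definition splitting :: "('a::topological_space, 'n::finite) chart set \<Rightarrow> ('a \<Rightarrow> 'a \<Rightarrow> ('a, 'n) tvec \<Rightarrow> ('a, 'n) tvec) \<Rightarrow> bool" where
  "splitting A eps \<longleftrightarrow>
     (\<forall>p q. lin_on (tangent_space A p) (eps p q) \<and>
            bij_betw (eps p q) (tangent_space A p) (tangent_space A q)) \<and>
     (\<forall>p q r. \<forall>v\<in>tangent_space A p. eps q r (eps p q v) = eps p r v) \<and>
     (\<forall>p. \<forall>v\<in>tangent_space A p. eps p p v = v) \<and>
     (\<forall>c\<in>A. \<forall>c'\<in>A. \<forall>w. smooth_on (snd c ` fst c \<times> snd c' ` fst c')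
                                     (\<lambda>xy. split_coord A eps c c' xy w))"

text \<open>eps^i_k(x,y) = split_coord A eps c c (x,y) (axis k 1) $ i (same chart c);
  Gamma^i_{jk}(x) = d eps^i_k(x,y)/d y^j at y = x, i.e. Gam A eps c x j k $ i.\<close>
definition Gam :: "('a, 'n::finite) chart set \<Rightarrow> ('a \<Rightarrow> 'a \<Rightarrow> ('a, 'n) tvec \<Rightarrow> ('a, 'n) tvec)
     \<Rightarrow> ('a, 'n) chart \<Rightarrow> real^'n \<Rightarrow> 'n \<Rightarrow> 'n \<Rightarrow> real^'n" where
  "Gam A eps c x j k = dd (\<lambda>y. split_coord A eps c c (x, y) (axis k 1)) x (axis j 1)"

definition R2 :: "('a, 'n::finite) chart set \<Rightarrow> ('a \<Rightarrow> 'a \<Rightarrow> ('a, 'n) tvec \<Rightarrow> ('a, 'n) tvec)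
     \<Rightarrow> ('a, 'n) chart \<Rightarrow> real^'n \<Rightarrow> 'n \<Rightarrow> 'n \<Rightarrow> 'n \<Rightarrow> 'n \<Rightarrow> real" where
  "R2 A eps c x i r j k =
     (dd (\<lambda>x'. Gam A eps c x' k j $ i) x (axis r 1) + (\<Sum>a\<in>UNIV. Gam A eps c x k r $ a * Gam A eps c x a j $ i))
   - (dd (\<lambda>x'. Gam A eps c x' k r $ i) x (axis j 1) + (\<Sum>a\<in>UNIV. Gam A eps c x k j $ a * Gam A eps c x a r $ i))"

definition local_lie_group :: "('a::topological_space, 'n::finite) chart set \<Rightarrow> ('a \<Rightarrow> 'a \<Rightarrow> ('a, 'n) tvec \<Rightarrow> ('a, 'n) tvec) \<Rightarrow> bool" where
  "local_lie_group A eps \<longleftrightarrow> splitting A eps \<and>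
     (\<forall>c\<in>A. \<forall>x\<in>snd c ` fst c. \<forall>i r j k. R2 A eps c x i r j k = 0)"

definition vf_lcomb :: "real \<Rightarrow> ('a \<Rightarrow> ('a, 'n::finite) tvec) \<Rightarrow> real \<Rightarrow> ('a \<Rightarrow> ('a, 'n) tvec) \<Rightarrow> 'a \<Rightarrow> ('a, 'n) tvec" where
  "vf_lcomb a \<xi> b \<eta> = (\<lambda>p. lcomb a (\<xi> p) b (\<eta> p))"

definition vf_subspace :: "('a \<Rightarrow> ('a, 'n::finite) tvec) set \<Rightarrow> bool" where
  "vf_subspace S \<longleftrightarrow> (\<lambda>p c. 0) \<in> S \<and> (\<forall>\<xi>\<in>S. \<forall>\<eta>\<in>S. \<forall>a b. vf_lcomb a \<xi> b \<eta> \<in> S)"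

definition invariant_fields :: "('a::topological_space, 'n::finite) chart set \<Rightarrow> ('a \<Rightarrow> 'a \<Rightarrow> ('a, 'n) tvec \<Rightarrow> ('a, 'n) tvec) \<Rightarrow> ('a \<Rightarrow> ('a, 'n) tvec) set" where
  "invariant_fields A eps = {\<xi>. smooth_vector_field A \<xi> \<and> (\<forall>p q. eps p q (\<xi> p) = \<xi> q)}"

definition lie_bracket :: "('a, 'n::finite) chart set \<Rightarrow> ('a \<Rightarrow> ('a, 'n) tvec) \<Rightarrow> ('a \<Rightarrow> ('a, 'n) tvec) \<Rightarrow> 'a \<Rightarrow> ('a, 'n) tvec" where
  "lie_bracket A \<xi> \<eta> p = (\<lambda>c. if c \<in> A \<and> p \<in> fst c then
       dd (loc \<eta> c) (snd c p) (loc \<xi> c (snd c p)) - dd (loc \<xi> c) (snd c p) (loc \<eta> c (snd c p))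
     else 0)"

definition tangent_bracket :: "('a, 'n::finite) chart set \<Rightarrow> ('a \<Rightarrow> 'a \<Rightarrow> ('a, 'n) tvec \<Rightarrow> ('a, 'n) tvec)
     \<Rightarrow> 'a \<Rightarrow> ('a, 'n) tvec \<Rightarrow> ('a, 'n) tvec \<Rightarrow> ('a, 'n) tvec" where
  "tangent_bracket A eps p u v = (\<lambda>c. if c \<in> A \<and> p \<in> fst c then
       (\<chi> i. \<Sum>a\<in>UNIV. \<Sum>b\<in>UNIV. Gam A eps c (snd c p) a b $ i * (u c $ a * v c $ b - v c $ a * u c $ b))
     else 0)"

end

theory Submission
  imports Defs
begin

lemma Ck_lin: "Ck k S f \<Longrightarrow> Ck k S g \<Longrightarrow> Ck k S (\<lambda>x. a *\<^sub>R f x + b *\<^sub>R g x)"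
proof (induction k arbitrary: f g)
  case 0 then show ?case by (auto intro!: continuous_intros)
next
  case (Suc k)
  from Suc.prems obtain f' g' where f': "\<forall>x\<in>S. (f has_derivative f' x) (at x)" "\<forall>v. Ck k S (\<lambda>x. f' x v)"
    and g': "\<forall>x\<in>S. (g has_derivative g' x) (at x)" "\<forall>v. Ck k S (\<lambda>x. g' x v)" by auto
  show ?case
    apply (simp only: Ck.simps)
    apply (rule exI[of _ "\<lambda>x v. a *\<^sub>R f' x v + b *\<^sub>R g' x v"])
    using f' g' Suc.IH by (auto intro!: derivative_eq_intros)
qed

lemma Ck_zero: "Ck k S (\<lambda>x. 0)"
proof (induction k)
  case 0 then show ?case by simp
next
  case (Suc k) then show ?case by (auto intro!: exI[of _ "\<lambda>x v. 0"])
qed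

lemma Ck_slice: "Ck k (S1 \<times> S2) F \<Longrightarrow> x0 \<in> S1 \<Longrightarrow> Ck k S2 (\<lambda>y. F (x0, y))"
proof (induction k arbitrary: F)
  case 0 then show ?case
    by (auto intro!: continuous_on_compose2[OF 0(1)[simplified]] continuous_intros)
next
  case (Suc k)
  from Suc.prems obtain F' where F': "\<forall>z\<in>S1\<times>S2. (F has_derivative F' z) (at z)" "\<forall>v. Ck k (S1\<times>S2) (\<lambda>z. F' z v)" by auto
  show ?case
    apply (simp only: Ck.simps)
    apply (rule exI[of _ "\<lambda>y u. F' (x0,y) (0,u)"])
    apply safe
    subgoal for y
    proof -
      assume y: "y \<in> S2"
      have "((\<lambda>y. (x0,y)) has_derivative (\<lambda>u. (0,u))) (at y)"
        by (auto intro!: derivative_eq_intros)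
      then show ?thesis
      using has_derivative_compose[of "\<lambda>y. (x0,y)" "\<lambda>u. (0,u)" y UNIV F "F' (x0,y)"] F'(1) Suc.prems(2) y
      by auto
    qed
    subgoal for u using Suc.IH[of "\<lambda>z. F' z (0,u)"] F'(2) Suc.prems(2) by auto
    done
qed

lemma smooth_deriv: "smooth_on S f \<Longrightarrow> x \<in> S \<Longrightarrow> (f has_derivative dd f x) (at x)"
  unfolding smooth_on_def dd_def
  by (metis Ck.simps(2) frechet_derivative_at)

lemma dd_lin: "(f has_derivative dd f x) (at x) \<Longrightarrow> dd f x (a *\<^sub>R u + b *\<^sub>R v) = a *\<^sub>R dd f x u + b *\<^sub>R dd f x v"
proof -
  assume "(f has_derivative dd f x) (at x)"
  then have "linear (dd f x)" using has_derivative_bounded_linear bounded_linear.linear by blast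
  then show ?thesis by (simp add: linear_add linear_scale)
qed

lemma chart_open:
  assumes "smooth_atlas A" "c \<in> A" "open T" "T \<subseteq> fst c"
  shows "open (snd c ` T)"
proof -
  have h: "homeomorphism (fst c) (snd c ` fst c) (snd c) (inv_into (fst c) (snd c))" "open (snd c ` fst c)"
    using assms unfolding smooth_atlas_def by auto
  have "openin (top_of_set (fst c)) T" using assms(3,4) by (simp add: open_subset)
  from homeomorphism_imp_open_map[OF h(1) this] h(2) show ?thesis using openin_open_trans by blast
qed

lemma chart_inj: "smooth_atlas A \<Longrightarrow> c \<in> A \<Longrightarrow> inj_on (snd c) (fst c)"
  unfolding smooth_atlas_def by auto

lemma trans_val: "smooth_atlas A \<Longrightarrow> c \<in> A \<Longrightarrow> p \<in> fst c \<Longrightarrow> transition c c' (snd c p) = snd c' p"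
  unfolding transition_def using chart_inj[of A c] by (simp add: inv_into_f_f)

lemma trans_deriv:
  assumes "smooth_atlas A" "c \<in> A" "c' \<in> A" "p \<in> fst c" "p \<in> fst c'"
  shows "(transition c c' has_derivative dd (transition c c') (snd c p)) (at (snd c p))"
proof -
  have "smooth_on (snd c ` (fst c \<inter> fst c')) (transition c c')" using assms unfolding smooth_atlas_def by auto
  then show ?thesis using smooth_deriv assms by blast
qed

lemma trans_chain:
  assumes A: "smooth_atlas A" and c: "c \<in> A" "c' \<in> A" "c'' \<in> A" and p: "p \<in> fst c" "p \<in> fst c'" "p \<in> fst c''"
  shows "dd (transition c' c'') (snd c' p) (dd (transition c c') (snd c p) w) = dd (transition c c'') (snd c p) w"
proof -
  let ?U = "snd c ` (fst c \<inter> fst c' \<inter> fst c'')"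
  have opn: "\<And>c. c \<in> A \<Longrightarrow> open (fst c)" using A unfolding smooth_atlas_def by auto
  have U: "open ?U" by (rule chart_open[OF A c(1)]) (use opn[OF c(1)] opn[OF c(2)] opn[OF c(3)] in auto)
  have x: "snd c p \<in> ?U" using p by auto
  have d1: "(transition c c' has_derivative dd (transition c c') (snd c p)) (at (snd c p))"
    by (rule trans_deriv) (use A c p in auto)
  have d2: "(transition c' c'' has_derivative dd (transition c' c'') (snd c' p)) (at (transition c c' (snd c p)))"
    using trans_deriv[OF A c(2) c(3) p(2) p(3)] trans_val[OF A c(1) p(1)] by simp
  have comp: "((transition c' c'' \<circ> transition c c') has_derivative (dd (transition c' c'') (snd c' p) \<circ> dd (transition c c') (snd c p))) (at (snd c p))"
    using diff_chain_at[OF d1 d2] .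
  have eq: "\<And>y. y \<in> ?U \<Longrightarrow> (transition c' c'' \<circ> transition c c') y = transition c c'' y"
  proof -
    fix y assume "y \<in> ?U"
    then obtain z where z: "z \<in> fst c" "z \<in> fst c'" "z \<in> fst c''" "y = snd c z" by auto
    show "(transition c' c'' \<circ> transition c c') y = transition c c'' y"
      using trans_val[OF A c(1) z(1)] trans_val[OF A c(2) z(2)] trans_val[OF A c(1) z(1)] z(4) by simp
  qed
  have "(transition c c'' has_derivative (dd (transition c' c'') (snd c' p) \<circ> dd (transition c c') (snd c p))) (at (snd c p))"
    by (rule has_derivative_transform_within_open[OF comp U x eq])
  moreover have "(transition c c'' has_derivative dd (transition c c'') (snd c p)) (at (snd c p))"
    by (rule trans_deriv) (use A c p in auto)
  ultimately show ?thesis using has_derivative_unique by (metis comp_apply)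
qed


lemma tangent_spaceI:
  assumes "\<And>c'. c' \<notin> A \<or> p \<notin> fst c' \<Longrightarrow> v c' = 0"
    and "\<And>c' c''. c' \<in> A \<Longrightarrow> c'' \<in> A \<Longrightarrow> p \<in> fst c' \<Longrightarrow> p \<in> fst c'' \<Longrightarrow> v c'' = dd (transition c' c'') (snd c' p) (v c')"
  shows "v \<in> tangent_space A p"
  using assms unfolding tangent_space_def by blast

lemma tangent_spaceD0: "v \<in> tangent_space A p \<Longrightarrow> c' \<notin> A \<or> p \<notin> fst c' \<Longrightarrow> v c' = 0"
  unfolding tangent_space_def by blast

lemma tangent_spaceD1: "v \<in> tangent_space A p \<Longrightarrow> c' \<in> A \<Longrightarrow> c'' \<in> A \<Longrightarrow> p \<in> fst c' \<Longrightarrow> p \<in> fst c'' \<Longrightarrow> v c'' = dd (transition c' c'') (snd c' p) (v c')"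
  unfolding tangent_space_def by blast

lemma tv_in:
  assumes A: "smooth_atlas A" and c: "c \<in> A" "p \<in> fst c"
  shows "tv A c p w \<in> tangent_space A p"
proof (rule tangent_spaceI)
  fix c' :: "('a,'b) chart" assume "c' \<notin> A \<or> p \<notin> fst c'" then show "tv A c p w c' = 0" by (auto simp add: tv_def)
next
  fix c' c'' assume h: "c' \<in> A" "c'' \<in> A" "p \<in> fst c'" "p \<in> fst c''"
  show "tv A c p w c'' = dd (transition c' c'') (snd c' p) (tv A c p w c')"
    using trans_chain[OF A c(1) h(1) h(2) c(2) h(3) h(4), of w] h by (simp add: tv_def)
qed

lemma tv_eq:
  assumes "v \<in> tangent_space A p" "c \<in> A" "p \<in> fst c"
  shows "tv A c p (v c) = v"
proof
  fix c' show "tv A c p (v c) c' = v c'"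
    using assms tangent_spaceD0[OF assms(1), of c'] tangent_spaceD1[OF assms(1) assms(2), of c'] unfolding tv_def by auto
qed

lemma tv_lin:
  assumes A: "smooth_atlas A" and c: "c \<in> A" "p \<in> fst c"
  shows "tv A c p (a *\<^sub>R u + b *\<^sub>R w) = lcomb a (tv A c p u) b (tv A c p w)"
proof
  fix c' show "tv A c p (a *\<^sub>R u + b *\<^sub>R w) c' = lcomb a (tv A c p u) b (tv A c p w) c'"
  proof (cases "c' \<in> A \<and> p \<in> fst c'")
    case True
    have "dd (transition c c') (snd c p) (a *\<^sub>R u + b *\<^sub>R w) = a *\<^sub>R dd (transition c c') (snd c p) u + b *\<^sub>R dd (transition c c') (snd c p) w"
      using True by (intro dd_lin trans_deriv[OF A c(1)]) (auto simp: c)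
    then show ?thesis using True unfolding tv_def lcomb_def by simp
  next
    case False then show ?thesis unfolding tv_def lcomb_def by auto
  qed
qed

lemma tangent_lcomb:
  assumes A: "smooth_atlas A" and u: "u \<in> tangent_space A p" and v: "v \<in> tangent_space A p"
  shows "lcomb a u b v \<in> tangent_space A p"
proof (rule tangent_spaceI)
  fix c' :: "('a,'b) chart" assume "c' \<notin> A \<or> p \<notin> fst c'"
  then show "lcomb a u b v c' = 0" using tangent_spaceD0[OF u] tangent_spaceD0[OF v] by (simp add: lcomb_def)
next
  fix c' c'' assume h: "c' \<in> A" "c'' \<in> A" "p \<in> fst c'" "p \<in> fst c''"
  have "u c'' = dd (transition c' c'') (snd c' p) (u c')" "v c'' = dd (transition c' c'') (snd c' p) (v c')"
    using tangent_spaceD1[OF u h] tangent_spaceD1[OF v h] by auto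
  then show "lcomb a u b v c'' = dd (transition c' c'') (snd c' p) (lcomb a u b v c')"
    using dd_lin[OF trans_deriv[OF A h(1) h(2) h(3) h(4)], of a "u c'" b "v c'"] by (simp add: lcomb_def)
qed

lemma linear_expand:
  fixes f :: "real^'n \<Rightarrow> 'y::real_vector"
  assumes "linear f" shows "f w = (\<Sum>k\<in>UNIV. w$k *\<^sub>R f (axis k 1))"
proof -
  have "f w = f (\<Sum>k\<in>UNIV. w$k *\<^sub>R axis k 1)"
    using basis_expansion[of w] by (simp add: scalar_mult_eq_scaleR)
  also have "\<dots> = (\<Sum>k\<in>UNIV. w$k *\<^sub>R f (axis k 1))"
    using assms by (simp add: linear_sum linear_scale)
  finally show ?thesis .
qed

lemma dd_expand:
  fixes f :: "real^'n \<Rightarrow> 'y::real_normed_vector"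
  assumes "(f has_derivative dd f x) (at x)" shows "dd f x u = (\<Sum>j\<in>UNIV. u$j *\<^sub>R dd f x (axis j 1))"
  using assms has_derivative_bounded_linear bounded_linear.linear linear_expand by blast

lemma dd_zero: "(f has_derivative dd f x) (at x) \<Longrightarrow> dd f x 0 = 0"
  using dd_lin[of f x 0 0 0 0] by simp

context
  fixes A :: "('a::topological_space, 'n::finite) chart set"
    and eps :: "'a \<Rightarrow> 'a \<Rightarrow> ('a, 'n) tvec \<Rightarrow> ('a, 'n) tvec"
  assumes A: "smooth_atlas A" and S: "splitting A eps"
begin

lemma eps_lin: "u \<in> tangent_space A p \<Longrightarrow> v \<in> tangent_space A p \<Longrightarrow> eps p q (lcomb a u b v) = lcomb a (eps p q u) b (eps p q v)"
  using S unfolding splitting_def lin_on_def by blast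

lemma eps_in: "u \<in> tangent_space A p \<Longrightarrow> eps p q u \<in> tangent_space A q"
  using S unfolding splitting_def bij_betw_def by blast

lemma eps_comp: "u \<in> tangent_space A p \<Longrightarrow> eps q r (eps p q u) = eps p r u"
  using S unfolding splitting_def by blast

lemma eps_id: "u \<in> tangent_space A p \<Longrightarrow> eps p p u = u"
  using S unfolding splitting_def by blast

lemma split_smooth: "c \<in> A \<Longrightarrow> c' \<in> A \<Longrightarrow> smooth_on (snd c ` fst c \<times> snd c' ` fst c') (\<lambda>xy. split_coord A eps c c' xy w)"
  using S unfolding splitting_def by blast

lemma inv_chart: "c \<in> A \<Longrightarrow> p \<in> fst c \<Longrightarrow> inv_into (fst c) (snd c) (snd c p) = p"
  using chart_inj[OF A] by (simp add: inv_into_f_f)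

lemma split_at: "c \<in> A \<Longrightarrow> p \<in> fst c \<Longrightarrow> split_coord A eps c c' (snd c p, y) w = eps p (inv_into (fst c') (snd c') y) (tv A c p w) c'"
  unfolding split_coord_def Let_def using inv_chart by simp

lemma split_linear:
  assumes c: "c \<in> A" "p \<in> fst c"
  shows "linear (\<lambda>w. split_coord A eps c c' (snd c p, y) w)"
proof (rule linearI)
  fix u w :: "real^'n"
  have h1: "tv A c p (u + w) = lcomb 1 (tv A c p u) 1 (tv A c p w)"
    using tv_lin[OF A c, of 1 u 1 w] by simp
  have h2: "eps p (inv_into (fst c') (snd c') y) (lcomb 1 (tv A c p u) 1 (tv A c p w)) = lcomb 1 (eps p (inv_into (fst c') (snd c') y) (tv A c p u)) 1 (eps p (inv_into (fst c') (snd c') y) (tv A c p w))"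
    using eps_lin[OF tv_in[OF A c] tv_in[OF A c]] .
  show "split_coord A eps c c' (snd c p, y) (u + w) = split_coord A eps c c' (snd c p, y) u + split_coord A eps c c' (snd c p, y) w"
    unfolding split_at[OF c] h1 h2 by (simp add: lcomb_def)
next
  fix r :: real and u :: "real^'n"
  have h1: "tv A c p (r *\<^sub>R u) = lcomb r (tv A c p u) 0 (tv A c p u)"
    using tv_lin[OF A c, of r u 0 u] by simp
  have h2: "eps p (inv_into (fst c') (snd c') y) (lcomb r (tv A c p u) 0 (tv A c p u)) = lcomb r (eps p (inv_into (fst c') (snd c') y) (tv A c p u)) 0 (eps p (inv_into (fst c') (snd c') y) (tv A c p u))"
    using eps_lin[OF tv_in[OF A c] tv_in[OF A c]] .
  show "split_coord A eps c c' (snd c p, y) (r *\<^sub>R u) = r *\<^sub>R split_coord A eps c c' (snd c p, y) u"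
    unfolding split_at[OF c] h1 h2 by (simp add: lcomb_def)
qed

lemma split_slice_smooth:
  assumes c: "c \<in> A" "c' \<in> A" "p \<in> fst c"
  shows "smooth_on (snd c' ` fst c') (\<lambda>y. split_coord A eps c c' (snd c p, y) w)"
  using split_smooth[OF c(1) c(2), of w] Ck_slice c(3) unfolding smooth_on_def by blast


lemma inv_loc:
  assumes xi: "\<xi> \<in> invariant_fields A eps" and c: "c \<in> A" "p \<in> fst c"
  shows "loc \<xi> c = (\<lambda>y. split_coord A eps c c (snd c p, y) (\<xi> p c))"
proof
  fix y
  have xp: "\<xi> p \<in> tangent_space A p" using xi unfolding invariant_fields_def smooth_vector_field_def by blast
  have inv: "\<And>q. eps p q (\<xi> p) = \<xi> q" using xi unfolding invariant_fields_def by blast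
  show "loc \<xi> c y = split_coord A eps c c (snd c p, y) (\<xi> p c)"
    unfolding split_at[OF c] tv_eq[OF xp c] inv loc_def ..
qed

lemma loc_deriv:
  assumes xi: "\<xi> \<in> invariant_fields A eps" and c: "c \<in> A" "p \<in> fst c"
  shows "dd (loc \<xi> c) (snd c p) u = (\<Sum>k\<in>UNIV. (\<xi> p c $ k) *\<^sub>R (\<Sum>j\<in>UNIV. u$j *\<^sub>R Gam A eps c (snd c p) j k))"
proof -
  define x where "x = snd c p"
  define E where "E k = (\<lambda>y. split_coord A eps c c (x, y) (axis k 1))" for k
  have xS: "x \<in> snd c ` fst c" using c x_def by auto
  have dE: "(E k has_derivative dd (E k) x) (at x)" for k
    unfolding E_def x_def by (rule smooth_deriv[OF split_slice_smooth[OF c(1) c(1) c(2)]]) (use xS x_def in simp)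
  have eq: "loc \<xi> c = (\<lambda>y. \<Sum>k\<in>UNIV. (\<xi> p c $ k) *\<^sub>R E k y)"
  proof
    fix y show "loc \<xi> c y = (\<Sum>k\<in>UNIV. (\<xi> p c $ k) *\<^sub>R E k y)"
      unfolding inv_loc[OF xi c] E_def x_def by (rule linear_expand[OF split_linear[OF c]])
  qed
  have "((\<lambda>y. \<Sum>k\<in>UNIV. (\<xi> p c $ k) *\<^sub>R E k y) has_derivative (\<lambda>u. \<Sum>k\<in>UNIV. (\<xi> p c $ k) *\<^sub>R dd (E k) x u)) (at x)"
    by (intro has_derivative_sum has_derivative_scaleR_right dE)
  then have "dd (loc \<xi> c) x = (\<lambda>u. \<Sum>k\<in>UNIV. (\<xi> p c $ k) *\<^sub>R dd (E k) x u)"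
    unfolding eq dd_def by (rule frechet_derivative_at[symmetric])
  moreover have "dd (E k) x u = (\<Sum>j\<in>UNIV. u$j *\<^sub>R Gam A eps c x j k)" for k
    using dd_expand[OF dE[of k], of u] by (simp only: Gam_def E_def)
  ultimately have "dd (loc \<xi> c) x u = (\<Sum>k\<in>UNIV. (\<xi> p c $ k) *\<^sub>R (\<Sum>j\<in>UNIV. u$j *\<^sub>R Gam A eps c x j k))"
    by (simp only:)
  then show ?thesis unfolding x_def .
qed

lemma bracket_eq:
  assumes xi: "\<xi> \<in> invariant_fields A eps" and eta: "\<eta> \<in> invariant_fields A eps"
  shows "lie_bracket A \<xi> \<eta> p = tangent_bracket A eps p (\<xi> p) (\<eta> p)"
proof
  fix c
  show "lie_bracket A \<xi> \<eta> p c = tangent_bracket A eps p (\<xi> p) (\<eta> p) c"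
  proof (cases "c \<in> A \<and> p \<in> fst c")
    case False then show ?thesis unfolding lie_bracket_def tangent_bracket_def by auto
  next
    case True
    then have c: "c \<in> A" "p \<in> fst c" by auto
    define G where "G a b = Gam A eps c (snd c p) a b" for a b
    have lx: "loc \<xi> c (snd c p) = \<xi> p c" "loc \<eta> c (snd c p) = \<eta> p c"
      unfolding loc_def inv_chart[OF c] by auto
    have "lie_bracket A \<xi> \<eta> p c = (\<Sum>k\<in>UNIV. (\<eta> p c $ k) *\<^sub>R (\<Sum>j\<in>UNIV. \<xi> p c $j *\<^sub>R G j k))
         - (\<Sum>k\<in>UNIV. (\<xi> p c $ k) *\<^sub>R (\<Sum>j\<in>UNIV. \<eta> p c $j *\<^sub>R G j k))"
      unfolding lie_bracket_def if_P[OF True] lx loc_deriv[OF eta c] loc_deriv[OF xi c] G_def ..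
    also have "\<dots> = tangent_bracket A eps p (\<xi> p) (\<eta> p) c"
    proof (subst vec_eq_iff, rule allI)
      fix i
      show "((\<Sum>k\<in>UNIV. (\<eta> p c $ k) *\<^sub>R (\<Sum>j\<in>UNIV. \<xi> p c $j *\<^sub>R G j k))
         - (\<Sum>k\<in>UNIV. (\<xi> p c $ k) *\<^sub>R (\<Sum>j\<in>UNIV. \<eta> p c $j *\<^sub>R G j k))) $ i
         = tangent_bracket A eps p (\<xi> p) (\<eta> p) c $ i"
      proof -
        have r: "tangent_bracket A eps p (\<xi> p) (\<eta> p) c $ i = (\<Sum>a\<in>UNIV. \<Sum>b\<in>UNIV. G a b $ i * (\<xi> p c $ a * \<eta> p c $ b - \<eta> p c $ a * \<xi> p c $ b))"
          unfolding tangent_bracket_def G_def using True by simp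
        also have "\<dots> = (\<Sum>b\<in>UNIV. \<Sum>a\<in>UNIV. G a b $ i * (\<xi> p c $ a * \<eta> p c $ b - \<eta> p c $ a * \<xi> p c $ b))"
          by (rule sum.swap)
        also have "\<dots> = (\<Sum>b\<in>UNIV. \<eta> p c $ b * (\<Sum>a\<in>UNIV. \<xi> p c $ a * G a b $ i)) - (\<Sum>b\<in>UNIV. \<xi> p c $ b * (\<Sum>a\<in>UNIV. \<eta> p c $ a * G a b $ i))"
        proof -
          have e1: "\<And>a b. G a b $ i * (\<xi> p c $ a * \<eta> p c $ b - \<eta> p c $ a * \<xi> p c $ b) = \<eta> p c $ b * (\<xi> p c $ a * G a b $ i) - \<xi> p c $ b * (\<eta> p c $ a * G a b $ i)"
            by (simp add: algebra_simps)
          show ?thesis unfolding e1 sum_subtractf sum_distrib_left ..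
        qed
        also have "\<dots> = ((\<Sum>k\<in>UNIV. (\<eta> p c $ k) *\<^sub>R (\<Sum>j\<in>UNIV. \<xi> p c $j *\<^sub>R G j k))
         - (\<Sum>k\<in>UNIV. (\<xi> p c $ k) *\<^sub>R (\<Sum>j\<in>UNIV. \<eta> p c $j *\<^sub>R G j k))) $ i"
          unfolding vector_minus_component sum_component vector_scaleR_component real_scaleR_def ..
        finally show ?thesis by (rule sym)
      qed
    qed
    finally show ?thesis .
  qed
qed


lemma zero_T: "(\<lambda>c. 0) \<in> tangent_space A p"
proof (rule tangent_spaceI)
  fix c' c'' assume h: "c' \<in> A" "c'' \<in> A" "p \<in> fst c'" "p \<in> fst c''"
  show "(0::real^'n) = dd (transition c' c'') (snd c' p) 0"
    using dd_zero[OF trans_deriv[OF A h]] by simp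
qed simp

lemma eps_zero: "eps p q (\<lambda>c. 0) = (\<lambda>c. 0)"
proof -
  have z: "lcomb 0 (\<lambda>c::('a,'n) chart. 0::real^'n) 0 (\<lambda>c. 0) = (\<lambda>c. 0)" by (simp add: lcomb_def)
  have "eps p q (lcomb 0 (\<lambda>c. 0) 0 (\<lambda>c. 0)) = lcomb 0 (eps p q (\<lambda>c. 0)) 0 (eps p q (\<lambda>c. 0))"
    by (rule eps_lin[OF zero_T zero_T])
  then show ?thesis unfolding z by (simp add: lcomb_def)
qed

lemma inv_fields_subspace: "vf_subspace (invariant_fields A eps)"
  unfolding vf_subspace_def
proof safe
  show "(\<lambda>p c. 0) \<in> invariant_fields A eps"
    unfolding invariant_fields_def smooth_vector_field_def smooth_on_def loc_def
    using zero_T eps_zero by (simp add: Ck_zero)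
next
  fix \<xi> \<eta> a b assume xi: "\<xi> \<in> invariant_fields A eps" and eta: "\<eta> \<in> invariant_fields A eps"
  have xT: "\<And>q. \<xi> q \<in> tangent_space A q" and eT: "\<And>q. \<eta> q \<in> tangent_space A q"
    using xi eta unfolding invariant_fields_def smooth_vector_field_def by auto
  have xs: "\<And>c. c \<in> A \<Longrightarrow> smooth_on (snd c ` fst c) (loc \<xi> c)" and es: "\<And>c. c \<in> A \<Longrightarrow> smooth_on (snd c ` fst c) (loc \<eta> c)"
    using xi eta unfolding invariant_fields_def smooth_vector_field_def by auto
  have xi_inv: "\<And>p q. eps p q (\<xi> p) = \<xi> q" and eta_inv: "\<And>p q. eps p q (\<eta> p) = \<eta> q"
    using xi eta unfolding invariant_fields_def by auto
  have locl: "loc (vf_lcomb a \<xi> b \<eta>) c = (\<lambda>x. a *\<^sub>R loc \<xi> c x + b *\<^sub>R loc \<eta> c x)" for c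
    by (rule ext) (simp add: loc_def vf_lcomb_def lcomb_def)
  show "vf_lcomb a \<xi> b \<eta> \<in> invariant_fields A eps"
    unfolding invariant_fields_def smooth_vector_field_def mem_Collect_eq
  proof (intro conjI allI ballI)
    fix q show "vf_lcomb a \<xi> b \<eta> q \<in> tangent_space A q"
      unfolding vf_lcomb_def by (rule tangent_lcomb[OF A xT eT])
  next
    fix c assume "c \<in> A"
    then show "smooth_on (snd c ` fst c) (loc (vf_lcomb a \<xi> b \<eta>) c)"
      using xs es unfolding locl smooth_on_def by (blast intro: Ck_lin)
  next
    fix p q show "eps p q (vf_lcomb a \<xi> b \<eta> p) = vf_lcomb a \<xi> b \<eta> q"
      unfolding vf_lcomb_def eps_lin[OF xT eT] xi_inv eta_inv ..
  qed
qed

lemma eval_bij: "bij_betw (\<lambda>\<xi>. \<xi> p) (invariant_fields A eps) (tangent_space A p)"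
  unfolding bij_betw_def
proof (intro conjI)
  show "inj_on (\<lambda>\<xi>. \<xi> p) (invariant_fields A eps)"
  proof (rule inj_onI)
    fix \<xi> \<eta> assume xi: "\<xi> \<in> invariant_fields A eps" and eta: "\<eta> \<in> invariant_fields A eps" and e: "\<xi> p = \<eta> p"
    have "\<And>p q. eps p q (\<xi> p) = \<xi> q" "\<And>p q. eps p q (\<eta> p) = \<eta> q"
      using xi eta unfolding invariant_fields_def by auto
    then show "\<xi> = \<eta>" using e by (metis ext)
  qed
next
  show "(\<lambda>\<xi>. \<xi> p) ` invariant_fields A eps = tangent_space A p"
  proof
    show "(\<lambda>\<xi>. \<xi> p) ` invariant_fields A eps \<subseteq> tangent_space A p"
      unfolding invariant_fields_def smooth_vector_field_def by auto
  next
    show "tangent_space A p \<subseteq> (\<lambda>\<xi>. \<xi> p) ` invariant_fields A eps"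
    proof
      fix v assume v: "v \<in> tangent_space A p"
      obtain c where c: "c \<in> A" "p \<in> fst c" using A unfolding smooth_atlas_def by blast
      define \<xi> where "\<xi> = (\<lambda>q. eps p q v)"
      have "\<xi> \<in> invariant_fields A eps"
        unfolding invariant_fields_def smooth_vector_field_def mem_Collect_eq
      proof (intro conjI allI ballI)
        fix q show "\<xi> q \<in> tangent_space A q" unfolding \<xi>_def by (rule eps_in[OF v])
      next
        fix c' assume c': "c' \<in> A"
        have "loc \<xi> c' = (\<lambda>y. split_coord A eps c c' (snd c p, y) (v c))"
          unfolding split_at[OF c] tv_eq[OF v c] loc_def \<xi>_def ..
        then show "smooth_on (snd c' ` fst c') (loc \<xi> c')"
          using split_slice_smooth[OF c(1) c' c(2)] by simp
      next
        fix q r show "eps q r (\<xi> q) = \<xi> r" unfolding \<xi>_def by (rule eps_comp[OF v])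
      qed
      moreover have "\<xi> p = v" unfolding \<xi>_def by (rule eps_id[OF v])
      ultimately show "v \<in> (\<lambda>\<xi>. \<xi> p) ` invariant_fields A eps" by (metis image_eqI)
    qed
  qed
qed

end

theorem proposition11:
  fixes A :: "('a::{t2_space, second_countable_topology}, 'n::finite) chart set"
    and eps :: "'a \<Rightarrow> 'a \<Rightarrow> ('a, 'n) tvec \<Rightarrow> ('a, 'n) tvec"
    and p :: 'a
  assumes "CARD('n) \<ge> 2"
    and "connected (UNIV :: 'a set)"
    and "smooth_atlas A"
    and "local_lie_group A eps"
  shows "vf_subspace (invariant_fields A eps)
       \<and> (\<forall>\<xi>\<in>invariant_fields A eps. \<forall>\<eta>\<in>invariant_fields A eps. \<forall>a b.
             vf_lcomb a \<xi> b \<eta> p = lcomb a (\<xi> p) b (\<eta> p))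
       \<and> bij_betw (\<lambda>\<xi>. \<xi> p) (invariant_fields A eps) (tangent_space A p)
       \<and> (\<forall>\<xi>\<in>invariant_fields A eps. \<forall>\<eta>\<in>invariant_fields A eps.
             lie_bracket A \<xi> \<eta> p = tangent_bracket A eps p (\<xi> p) (\<eta> p))"
proof -
  have S: "splitting A eps" using assms(4) unfolding local_lie_group_def by blast
  show ?thesis
    using inv_fields_subspace[OF assms(3) S] eval_bij[OF assms(3) S] bracket_eq[OF assms(3) S]
    by (simp add: vf_lcomb_def)
qed

end
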